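(* Let $p$ be a prime number and $n\in\mathbb{N}$, $n\ge 1$. Then there exists a bijection between the set $W_p^n$ and the orbit set $(\mathbb{Z}_p\times\mathbb{Z}_p)^n/\mathrm{SL}(2,\mathbb{Z})$.
   Context: Consider the alphabet of $p^2$ letters $\{0,1,\dots,p^2-1\}$. $W_p^n$ is the set of words $a_1a_2\dots a_n$ of length $n$ over this alphabet consisting of the all-zero word $00\dots0$ together with all words for which there exist integers $j,k$ with $1\le j<k\le n+1$ such that: (R1) $a_i=0$ for $i<j$; (R2) $a_j=1$; (R3) $a_i\in\{0,1,\dots,p-1\}$ for $j<i<k$; (R4) if $k\le n$ then $a_k\in\{p,2p,\dots,(p-1)p\}$; (R5) if $k<n$ then $a_i\in\{0,1,\dots,p^2-1\}$ for $i>k$. The group $\mathrm{SL}(2,\mathbb{Z})$ acts on the left on $(\mathbb{Z}_p\times\mathbb{Z}_p)^n$, whose elements are viewed as $2\times n$ matrices $\binom{u}{v}$ with rows $u,v\in\mathbb{Z}_p^n$, by matrix multiplication with entries reduced modulo $p$; $(\mathbb{Z}_p\times\mathbb{Z}_p)^n/\mathrm{SL}(2,\mathbb{Z})$ denotes the set of orbits of this action. *)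

theory Defs
  imports "HOL-Computational_Algebra.Primes"
begin

text \<open>Words of length n over the alphabet {0,...,p^2-1}, as lists; the letter a_i
  (1-based, as in the paper) is w ! (i - 1).\<close>

definition W :: "nat \<Rightarrow> nat \<Rightarrow> nat list set" where
  "W p n = {w. length w = n \<and> (\<forall>i<n. w ! i < p^2) \<and>
     (w = replicate n 0 \<or>
      (\<exists>j k. 1 \<le> j \<and> j < k \<and> k \<le> n + 1 \<and>
        (\<forall>i. 1 \<le> i \<and> i < j \<longrightarrow> w ! (i - 1) = 0) \<and>
        w ! (j - 1) = 1 \<and>
        (\<forall>i. j < i \<and> i < k \<longrightarrow> w ! (i - 1) \<in> {0..<p}) \<and>
        (k \<le> n \<longrightarrow> w ! (k - 1) \<in> {p * t | t. 1 \<le> t \<and> t \<le> p - 1}) \<and>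
        (k < n \<longrightarrow> (\<forall>i. k < i \<and> i \<le> n \<longrightarrow> w ! (i - 1) \<in> {0..<p^2}))))}"

text \<open>(Z_p x Z_p)^n as pairs (u, v) of rows u, v in Z_p^n, with Z_p represented by {0..p-1}
  and rows as integer lists of length n.\<close>

definition pairs :: "nat \<Rightarrow> nat \<Rightarrow> (int list \<times> int list) set" where
  "pairs p n = {(u, v). length u = n \<and> length v = n \<and>
      set u \<subseteq> {0..<int p} \<and> set v \<subseteq> {0..<int p}}"

text \<open>SL(2,Z): the matrix (a b; c d) is encoded as (a, b, c, d).\<close>

definition SL2Z :: "(int \<times> int \<times> int \<times> int) set" where
  "SL2Z = {(a, b, c, d). a * d - b * c = 1}"

fun act :: "nat \<Rightarrow> int \<times> int \<times> int \<times> int \<Rightarrow> int list \<times> int list \<Rightarrow> int list \<times> int list" where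
  "act p (a, b, c, d) (u, v) =
     (map2 (\<lambda>x y. (a * x + b * y) mod int p) u v,
      map2 (\<lambda>x y. (c * x + d * y) mod int p) u v)"

definition orbit_rel :: "nat \<Rightarrow> nat \<Rightarrow> ((int list \<times> int list) \<times> (int list \<times> int list)) set" where
  "orbit_rel p n = {(x, y). x \<in> pairs p n \<and> y \<in> pairs p n \<and> (\<exists>g\<in>SL2Z. act p g x = y)}"

definition orbits :: "nat \<Rightarrow> nat \<Rightarrow> (int list \<times> int list) set set" where
  "orbits p n = pairs p n // orbit_rel p n"

end

theory Submission
  imports Defs "HOL-Number_Theory.Number_Theory"
begin

lemma act_eq_iff:
  assumes "length u = length v"
  shows "act p (a,b,c,d) (u,v) = (u',v') \<longleftrightarrow> length u' = length u \<and> length v' = length u \<and>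
     (\<forall>i<length u. u'!i = (a*u!i + b*v!i) mod int p \<and> v'!i = (c*u!i + d*v!i) mod int p)"
  using assms by (auto simp: list_eq_iff_nth_eq)

lemma act_fst_nth: "length u = length v \<Longrightarrow> i < length u \<Longrightarrow>
   fst (act p (a,b,c,d) (u,v)) ! i = (a*u!i + b*v!i) mod int p" by simp
lemma act_snd_nth: "length u = length v \<Longrightarrow> i < length u \<Longrightarrow>
   snd (act p (a,b,c,d) (u,v)) ! i = (c*u!i + d*v!i) mod int p" by simp

lemma mod_lin: "((a::int)*(X mod m) + b*(Y mod m)) mod m = (a*X + b*Y) mod m"
  by (metis mod_add_cong mod_mult_right_eq)

lemma act_comp:
  assumes "length u = length v"
  shows "act p (a,b,c,d) (act p (e,f,g,h) (u,v)) = act p (a*e+b*g, a*f+b*h, c*e+d*g, c*f+d*h) (u,v)"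
proof -
  have *: "(a*((e*x+f*y) mod m) + b*((g*x+h*y) mod m)) mod m = ((a*e+b*g)*x + (a*f+b*h)*y) mod m"
    for x y m :: int
    by (simp add: mod_lin algebra_simps)
  have **: "(c*((e*x+f*y) mod m) + d*((g*x+h*y) mod m)) mod m = ((c*e+d*g)*x + (c*f+d*h)*y) mod m"
    for x y m :: int
    by (simp add: mod_lin algebra_simps)
  show ?thesis using assms by (auto simp: list_eq_iff_nth_eq * **)
qed

lemma act_pairs: "x \<in> pairs p n \<Longrightarrow> p > 0 \<Longrightarrow> act p g x \<in> pairs p n"
  by (cases x; cases g) (auto simp: pairs_def set_zip)

lemma act_id: "x \<in> pairs p n \<Longrightarrow> act p (1,0,0,1) x = x"
proof (cases x)
  case (Pair u v)
  assume "x \<in> pairs p n"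
  then have "length u = n" "length v = n" "set u \<subseteq> {0..<int p}" "set v \<subseteq> {0..<int p}"
    using Pair by (auto simp: pairs_def)
  then have "act p (1,0,0,1) (u,v) = (u,v)"
    by (subst act_eq_iff) (auto simp: subset_iff in_set_conv_nth)
  then show ?thesis using Pair by simp
qed

lemma equiv_orb: "p > 0 \<Longrightarrow> equiv (pairs p n) (orbit_rel p n)"
proof (rule equivI)
  assume p: "p > 0"
  show "refl_on (pairs p n) (orbit_rel p n)"
  proof (rule refl_onI)
    fix x assume "x \<in> pairs p n"
    then show "(x,x) \<in> orbit_rel p n" unfolding orbit_rel_def SL2Z_def
      using act_id[of x p n] by (intro CollectI case_prodI conjI bexI[of _ "(1,0,0,1)"]) auto
  qed
  show "sym (orbit_rel p n)"
  proof (rule symI)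
    fix x y assume "(x,y) \<in> orbit_rel p n"
    then obtain a b c d where xy: "x \<in> pairs p n" "y \<in> pairs p n" "a*d-b*c = 1" "act p (a,b,c,d) x = y"
      unfolding orbit_rel_def SL2Z_def by auto
    obtain u v where x: "x = (u,v)" by fastforce
    have l: "length u = length v" using xy(1) x by (auto simp: pairs_def)
    have "act p (d,-b,-c,a) y = act p (1,0,0,1) x"
      using xy(4)[symmetric] x l xy(3) by (simp only: act_comp) (auto simp: algebra_simps)
    then have "act p (d,-b,-c,a) y = x" using act_id xy(1) by simp
    then show "(y,x) \<in> orbit_rel p n" using xy unfolding orbit_rel_def SL2Z_def
      by (intro CollectI case_prodI conjI bexI[of _ "(d,-b,-c,a)"]) (auto simp: algebra_simps)
  qed
  show "trans (orbit_rel p n)"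
  proof (rule transI)
    fix x y z assume "(x,y) \<in> orbit_rel p n" "(y,z) \<in> orbit_rel p n"
    then obtain a b c d e f g h where xy: "x \<in> pairs p n" "z \<in> pairs p n" "a*d-b*c = 1" "act p (a,b,c,d) x = y"
      "e*h-f*g = 1" "act p (e,f,g,h) y = z"
      unfolding orbit_rel_def SL2Z_def by auto
    obtain u v where x: "x = (u,v)" by fastforce
    have l: "length u = length v" using xy(1) x by (auto simp: pairs_def)
    have "z = act p (e*a+f*c, e*b+f*d, g*a+h*c, g*b+h*d) x"
      using xy x l act_comp by auto
    moreover have "(e*a+f*c)*(g*b+h*d) - (e*b+f*d)*(g*a+h*c) = (a*d-b*c)*(e*h-f*g)"
      by (simp add: algebra_simps)
    ultimately show "(x,z) \<in> orbit_rel p n" using xy unfolding orbit_rel_def SL2Z_def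
      by (intro CollectI case_prodI conjI bexI[of _ "(e*a+f*c, e*b+f*d, g*a+h*c, g*b+h*d)"]) auto
  qed
qed (auto simp: orbit_rel_def)


lemma W_D:
  assumes "w \<in> W p n"
  shows "length w = n" "\<forall>i<n. w!i < p^2"
    "w = replicate n 0 \<or> (\<exists>J K. J < K \<and> K \<le> n \<and> (\<forall>i<J. w!i = 0) \<and> w!J = 1 \<and>
       (\<forall>i. J<i \<and> i<K \<longrightarrow> w!i < p) \<and> (K<n \<longrightarrow> (\<exists>t. 1\<le>t \<and> t\<le>p-1 \<and> w!K = p*t)))"
proof -
  show "length w = n" "\<forall>i<n. w!i < p^2" using assms by (auto simp: W_def)
  show "w = replicate n 0 \<or> (\<exists>J K. J < K \<and> K \<le> n \<and> (\<forall>i<J. w!i = 0) \<and> w!J = 1 \<and>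
       (\<forall>i. J<i \<and> i<K \<longrightarrow> w!i < p) \<and> (K<n \<longrightarrow> (\<exists>t. 1\<le>t \<and> t\<le>p-1 \<and> w!K = p*t)))"
  proof (cases "w = replicate n 0")
    case False
    then obtain j k where jk: "1 \<le> j" "j < k" "k \<le> n + 1"
        "\<forall>i. 1 \<le> i \<and> i < j \<longrightarrow> w ! (i - 1) = 0"
        "w ! (j - 1) = 1"
        "\<forall>i. j < i \<and> i < k \<longrightarrow> w ! (i - 1) \<in> {0..<p}"
        "k \<le> n \<longrightarrow> w ! (k - 1) \<in> {p * t | t. 1 \<le> t \<and> t \<le> p - 1}"
      using assms by (auto simp: W_def)
    have "(\<forall>i<j-1. w!i = 0)"
    proof (intro allI impI)
      fix i assume "i < j-1" then show "w!i = 0" using jk(4)[rule_format, of "i+1"] by auto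
    qed
    moreover have "\<forall>i. j-1<i \<and> i<k-1 \<longrightarrow> w!i < p"
    proof (intro allI impI)
      fix i assume "j-1<i \<and> i<k-1" then have "j < i+1 \<and> i+1 < k" using jk(1) by auto
      then show "w!i < p" using jk(6)[rule_format, of "i+1"] by auto
    qed
    moreover have "k-1<n \<longrightarrow> (\<exists>t. 1\<le>t \<and> t\<le>p-1 \<and> w!(k-1) = p*t)" using jk(7) by auto
    ultimately show ?thesis using jk by (intro disjI2 exI[of _ "j-1"] exI[of _ "k-1"]) auto
  qed simp
qed

lemma W_I0: "p > 0 \<Longrightarrow> replicate n 0 \<in> W p n"
  by (auto simp: W_def)

lemma W_I:
  assumes "length w = n" "\<forall>i<n. w!i < p^2" "J < K" "K \<le> n" "\<forall>i<J. w!i = 0" "w!J = 1"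
    "\<forall>i. J<i \<and> i<K \<longrightarrow> w!i < p" "K<n \<longrightarrow> (\<exists>t. 1\<le>t \<and> t\<le>p-1 \<and> w!K = p*t)"
  shows "w \<in> W p n"
proof -
  have a: "\<forall>i. 1 \<le> i \<and> i < J+1 \<longrightarrow> w ! (i - 1) = 0" using assms(5) by auto
  have b: "\<forall>i. J+1 < i \<and> i < K+1 \<longrightarrow> w ! (i - 1) \<in> {0..<p}"
  proof (intro allI impI)
    fix i assume "J+1 < i \<and> i < K+1"
    then have "J < i-1 \<and> i-1 < K" by auto
    then show "w ! (i - 1) \<in> {0..<p}" using assms(7) by auto
  qed
  have c: "K+1 \<le> n \<longrightarrow> w ! (K+1 - 1) \<in> {p * t | t. 1 \<le> t \<and> t \<le> p - 1}" using assms(8) by auto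
  have d: "K+1 < n \<longrightarrow> (\<forall>i. K+1 < i \<and> i \<le> n \<longrightarrow> w ! (i - 1) \<in> {0..<p^2})" using assms(2) by auto
  show ?thesis unfolding W_def
    apply (rule CollectI, intro conjI disjI2)
      apply (rule assms(1)) apply (rule assms(2))
    apply (rule exI[of _ "J+1"], rule exI[of _ "K+1"])
    using a b c d assms by auto
qed


definition dec :: "nat \<Rightarrow> nat list \<Rightarrow> int list \<times> int list" where
  "dec p w = (map (\<lambda>a. int (a mod p)) w, map (\<lambda>a. int (a div p)) w)"

fun canon :: "nat \<Rightarrow> nat \<Rightarrow> int list \<times> int list \<Rightarrow> bool" where
  "canon p n (u,v) = ((\<forall>i<n. u!i = 0 \<and> v!i = 0) \<or>
     (\<exists>J K. J<K \<and> K\<le>n \<and> (\<forall>i<J. u!i=0 \<and> v!i=0) \<and> u!J = 1 \<and> v!J = 0 \<and>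
        (\<forall>i. J<i \<and> i<K \<longrightarrow> v!i = 0) \<and> (K<n \<longrightarrow> u!K = 0 \<and> v!K \<noteq> 0)))"

definition enc :: "nat \<Rightarrow> int list \<times> int list \<Rightarrow> nat list" where
  "enc p x = map (\<lambda>i. nat (fst x ! i) + p * nat (snd x ! i)) [0..<length (fst x)]"

lemma dec_inj:
  assumes "dec p w1 = dec p w2"
  shows "w1 = w2"
proof -
  have l: "length w1 = length w2" using assms unfolding dec_def by (metis length_map prod.inject)
  have "w1!i = w2!i" if "i < length w1" for i
  proof -
    have m: "map (\<lambda>a. int (a mod p)) w1 = map (\<lambda>a. int (a mod p)) w2"
       "map (\<lambda>a. int (a div p)) w1 = map (\<lambda>a. int (a div p)) w2"
      using assms unfolding dec_def by simp_all
    have "int (w1!i mod p) = int (w2!i mod p)" "int (w1!i div p) = int (w2!i div p)"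
      using nth_map[of i w1] nth_map[of i w2] l that m by metis+
    then have "w1!i mod p = w2!i mod p" "w1!i div p = w2!i div p" by simp_all
    then show ?thesis by (metis div_mult_mod_eq)
  qed
  then show ?thesis using l by (simp add: list_eq_iff_nth_eq)
qed

lemma dec_W:
  assumes "prime p" "w \<in> W p n"
  shows "dec p w \<in> pairs p n" "canon p n (dec p w)"
proof -
  have p: "p > 1" using assms(1) prime_gt_1_nat by blast
  note D = W_D[OF assms(2)]
  have "w!i div p < p" if "i < n" for i
    using D(2) that by (simp add: less_mult_imp_div_less power2_eq_square)
  then show "dec p w \<in> pairs p n" using D(1) p
    unfolding dec_def pairs_def by (auto simp: in_set_conv_nth)
  show "canon p n (dec p w)"
    using D(3)
  proof
    assume "w = replicate n 0" then show ?thesis by (simp add: dec_def)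
  next
    assume "\<exists>J K. J < K \<and> K \<le> n \<and> (\<forall>i<J. w!i = 0) \<and> w!J = 1 \<and>
       (\<forall>i. J<i \<and> i<K \<longrightarrow> w!i < p) \<and> (K<n \<longrightarrow> (\<exists>t. 1\<le>t \<and> t\<le>p-1 \<and> w!K = p*t))"
    then obtain J K where JK: "J < K" "K \<le> n" "\<forall>i<J. w!i = 0" "w!J = 1"
       "\<forall>i. J<i \<and> i<K \<longrightarrow> w!i < p" "K<n \<longrightarrow> (\<exists>t. 1\<le>t \<and> t\<le>p-1 \<and> w!K = p*t)" by blast
    have K: "K<n \<longrightarrow> int (w!K mod p) = 0 \<and> int (w!K div p) \<noteq> 0"
      using JK(6) p by auto
    show ?thesis unfolding dec_def canon.simps
      apply (rule disjI2, rule exI[of _ J], rule exI[of _ K], intro conjI)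
      using JK(1) apply simp
      using JK(2) apply simp
      using JK(1,2,3) D(1) apply simp
      using JK(1,2,4) D(1) p apply simp
      using JK(1,2,4) D(1) p apply simp
      using JK(5) D(1) JK(2) apply simp
      using K D(1) by simp
  qed
qed

lemma enc_W:
  assumes "prime p" "(u,v) \<in> pairs p n" "canon p n (u,v)"
  shows "enc p (u,v) \<in> W p n" "dec p (enc p (u,v)) = (u,v)"
proof -
  have p: "p > 1" using assms(1) prime_gt_1_nat by blast
  have uv: "length u = n" "length v = n" "\<forall>i<n. 0 \<le> u!i \<and> u!i < int p" "\<forall>i<n. 0 \<le> v!i \<and> v!i < int p"
    using assms(2) unfolding pairs_def by (auto simp: subset_iff)
  have e: "enc p (u,v) ! i = nat (u!i) + p * nat (v!i)" if "i<n" for i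
    using that uv by (simp add: enc_def)
  have le: "length (enc p (u,v)) = n" using uv by (simp add: enc_def)
  have md: "(nat (u!i) + p * nat (v!i)) mod p = nat (u!i)" "(nat (u!i) + p * nat (v!i)) div p = nat (v!i)"
    if "i<n" for i using uv(3,4) that p by auto
  have "map (\<lambda>a. int (a mod p)) (enc p (u,v)) ! i = u ! i \<and> map (\<lambda>a. int (a div p)) (enc p (u,v)) ! i = v ! i"
    if "i < n" for i
  proof -
    have "map (\<lambda>a. int (a mod p)) (enc p (u,v)) ! i = int ((nat (u!i) + p * nat (v!i)) mod p)"
      "map (\<lambda>a. int (a div p)) (enc p (u,v)) ! i = int ((nat (u!i) + p * nat (v!i)) div p)"
      using e[OF that] le that by simp_all
    then show ?thesis using md[OF that] uv that by simp
  qed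
  then show "dec p (enc p (u,v)) = (u,v)"
    using le uv by (simp add: dec_def list_eq_iff_nth_eq)
  have lt: "enc p (u,v) ! i < p^2" if "i < n" for i
  proof -
    have "nat (u!i) < p" "nat (v!i) < p" using uv that by auto
    then have "nat (u!i) + p * nat (v!i) < p + p * nat (v!i)" by simp
    also have "\<dots> = p * (nat (v!i) + 1)" by simp
    also have "\<dots> \<le> p * p" using \<open>nat (v!i) < p\<close> by (intro mult_left_mono) auto
    finally show ?thesis using e that by (simp add: power2_eq_square)
  qed
  show "enc p (u,v) \<in> W p n"
    using assms(3)[unfolded canon.simps]
  proof
    assume "\<forall>i<n. u!i = 0 \<and> v!i = 0"
    then have "enc p (u,v) = replicate n 0" using e le by (simp add: list_eq_iff_nth_eq)
    then show ?thesis using W_I0 p by simp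
  next
    assume "\<exists>J K. J<K \<and> K\<le>n \<and> (\<forall>i<J. u!i=0 \<and> v!i=0) \<and> u!J = 1 \<and> v!J = 0 \<and>
        (\<forall>i. J<i \<and> i<K \<longrightarrow> v!i = 0) \<and> (K<n \<longrightarrow> u!K = 0 \<and> v!K \<noteq> 0)"
    then obtain J K where JK: "J<K" "K\<le>n" "\<forall>i<J. u!i=0 \<and> v!i=0" "u!J = 1" "v!J = 0"
        "\<forall>i. J<i \<and> i<K \<longrightarrow> v!i = 0" "K<n \<longrightarrow> u!K = 0 \<and> v!K \<noteq> 0" by blast
    show ?thesis
    proof (rule W_I[OF le _ JK(1,2)])
      show "\<forall>i<n. enc p (u,v) ! i < p\<^sup>2" using lt by auto
      show "\<forall>i<J. enc p (u,v) ! i = 0" using JK(1,2,3) e by auto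
      show "enc p (u,v) ! J = 1" using JK(1,2,4,5) e by auto
      show "\<forall>i. J < i \<and> i < K \<longrightarrow> enc p (u,v) ! i < p"
      proof (intro allI impI)
        fix i assume i: "J < i \<and> i < K"
        then have "i < n" "v!i = 0" using JK(2,6) by auto
        then show "enc p (u,v) ! i < p" using e uv(3) by (simp add: nat_less_iff)
      qed
      show "K < n \<longrightarrow> (\<exists>t\<ge>1. t \<le> p - 1 \<and> enc p (u,v) ! K = p * t)"
      proof
        assume K: "K < n"
        have "0 < v!K" "v!K < p" using JK(7) K uv(4) by (auto simp: order.strict_iff_order)
        then show "\<exists>t\<ge>1. t \<le> p - 1 \<and> enc p (u,v) ! K = p * t"
          using JK(7) K e by (intro exI[of _ "nat (v!K)"]) auto
      qed
    qed
  qed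
qed



lemma mod_lin2: "((c::int)*x+d*y) mod m = ((c mod m)*x + (d mod m)*y) mod m"
  by (metis mod_add_cong mod_mult_left_eq)

lemma small_dvd: "0 \<le> (x::int) \<Longrightarrow> x < m \<Longrightarrow> m dvd x \<Longrightarrow> x = 0"
  by (metis mod_pos_pos_trivial dvd_imp_mod_0)

lemma canon_unique:
  assumes pr: "prime p" and P1: "(u1,v1) \<in> pairs p n" and P2: "(u2,v2) \<in> pairs p n"
    and C1: "canon p n (u1,v1)" and C2: "canon p n (u2,v2)"
    and det: "a*d-b*c = 1" and A: "act p (a,b,c,d) (u1,v1) = (u2,v2)"
  shows "(u1,v1) = (u2,v2)"
proof -
  define P where "P = int p"
  have p1: "P > 1" using pr prime_gt_1_nat P_def by auto
  have prP: "prime P" using pr P_def by simp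
  have R1: "length u1 = n" "length v1 = n" "\<forall>i<n. 0 \<le> u1!i \<and> u1!i < P" "\<forall>i<n. 0 \<le> v1!i \<and> v1!i < P"
    using P1 unfolding pairs_def P_def by (auto simp: subset_iff)
  have R2: "length u2 = n" "length v2 = n" "\<forall>i<n. 0 \<le> u2!i \<and> u2!i < P" "\<forall>i<n. 0 \<le> v2!i \<and> v2!i < P"
    using P2 unfolding pairs_def P_def by (auto simp: subset_iff)
  have H: "u2!i = (a*u1!i + b*v1!i) mod P" "v2!i = (c*u1!i + d*v1!i) mod P" if "i<n" for i
    using A R1 that unfolding P_def by (subst (asm) act_eq_iff; simp)+
  have nodiv: "\<not> (P dvd a \<and> P dvd c)"
  proof
    assume "P dvd a \<and> P dvd c"
    then have "P dvd a*d-b*c" by auto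
    then have "P dvd 1" using det by simp
    then show False using p1 by simp
  qed
  have m1: "x mod P = x" if "0 \<le> x" "x < P" for x using that by simp
  have goal: "\<forall>i<n. u2!i = u1!i \<and> v2!i = v1!i"
    using C1[unfolded canon.simps]
  proof
    assume Z: "\<forall>i<n. u1!i = 0 \<and> v1!i = 0"
    then show ?thesis using H by simp
  next
    assume "\<exists>J K. J<K \<and> K\<le>n \<and> (\<forall>i<J. u1!i=0 \<and> v1!i=0) \<and> u1!J = 1 \<and> v1!J = 0 \<and>
        (\<forall>i. J<i \<and> i<K \<longrightarrow> v1!i = 0) \<and> (K<n \<longrightarrow> u1!K = 0 \<and> v1!K \<noteq> 0)"
    then obtain J K where JK: "J<K" "K\<le>n" "\<forall>i<J. u1!i=0 \<and> v1!i=0" "u1!J = 1" "v1!J = 0"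
        "\<forall>i. J<i \<and> i<K \<longrightarrow> v1!i = 0" "K<n \<longrightarrow> u1!K = 0 \<and> v1!K \<noteq> 0" by blast
    have Jn: "J < n" using JK by simp
    have colJ: "u2!J = a mod P" "v2!J = c mod P" using H[OF Jn] JK(4,5) by simp_all
    show ?thesis using C2[unfolded canon.simps]
    proof
      assume "\<forall>i<n. u2!i = 0 \<and> v2!i = 0"
      then have "P dvd a \<and> P dvd c" using colJ Jn by (simp add: dvd_eq_mod_eq_0)
      then show ?thesis using nodiv by blast
    next
      assume "\<exists>J K. J<K \<and> K\<le>n \<and> (\<forall>i<J. u2!i=0 \<and> v2!i=0) \<and> u2!J = 1 \<and> v2!J = 0 \<and>
        (\<forall>i. J<i \<and> i<K \<longrightarrow> v2!i = 0) \<and> (K<n \<longrightarrow> u2!K = 0 \<and> v2!K \<noteq> 0)"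
      then obtain J2 K2 where JK2: "J2<K2" "K2\<le>n" "\<forall>i<J2. u2!i=0 \<and> v2!i=0" "u2!J2 = 1" "v2!J2 = 0"
        "\<forall>i. J2<i \<and> i<K2 \<longrightarrow> v2!i = 0" "K2<n \<longrightarrow> u2!K2 = 0 \<and> v2!K2 \<noteq> 0" by blast
      have "\<not> J2 < J"
      proof
        assume "J2 < J"
        then have "u2!J2 = 0" using H(1)[of J2] JK(3) Jn by simp
        then show False using JK2(4) by simp
      qed
      moreover have "\<not> J < J2"
      proof
        assume "J < J2"
        then have "P dvd a \<and> P dvd c" using colJ JK2(3) by (simp add: dvd_eq_mod_eq_0)
        then show False using nodiv by blast
      qed
      ultimately have JJ: "J2 = J" by simp
      have am: "a mod P = 1" and cm: "c mod P = 0" using colJ JK2(4,5) JJ by simp_all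
      have "[a*d - b*c = 1*d - b*0] (mod P)"
        using am cm by (intro cong_diff cong_mult) (simp_all add: cong_def mod_mod_trivial p1)
      then have "[d = 1] (mod P)" using det by (simp add: cong_sym_eq)
      then have dm: "d mod P = 1" using p1 by (simp add: cong_def)
      have vv: "v2!i = v1!i" if "i<n" for i
        using H(2)[OF that] R1(4) that by (subst (asm) mod_lin2) (simp add: cm dm)
      have "\<not> K < K2"
      proof
        assume "K < K2"
        then have "K < n" "v2!K = 0" using JK2(2,6) JK(1) JJ by auto
        then show False using JK(7) vv by simp
      qed
      moreover have "\<not> K2 < K"
      proof
        assume "K2 < K"
        then have "K2 < n" "v1!K2 = 0" using JK(2,6) JK2(1) JJ by auto
        then show False using JK2(7) vv by simp
      qed
      ultimately have KK: "K2 = K" by simp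
      have bv: "b * v1!i mod P = 0" if "i<n" for i
      proof (cases "K < n")
        case True
        have t: "0 < v1!K" "v1!K < P" using JK(7) True R1(4) by (auto simp: order.strict_iff_order)
        have "u2!K = (b * v1!K) mod P" using H(1)[OF True] JK(7) True by simp
        then have "P dvd b * v1!K" using JK2(7) KK True by (simp add: dvd_eq_mod_eq_0)
        then have "P dvd b \<or> P dvd v1!K" using prP prime_dvd_multD by blast
        moreover have "\<not> P dvd v1!K"
        proof
          assume "P dvd v1!K"
          then have "v1!K = 0" using small_dvd[of "v1!K" P] t by simp
          then show False using t by simp
        qed
        ultimately show ?thesis by (simp add: mod_eq_0_iff_dvd)
      next
        case False
        then have "K = n" using JK(2) by simp
        then have "v1!i = 0"
          using JK(3,5,6) that by (metis linorder_neqE_nat)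
        then show ?thesis by simp
      qed
      have uu: "u2!i = u1!i" if "i<n" for i
      proof -
        have "u2!i = (a*u1!i + b*v1!i) mod P" using H(1)[OF that] .
        also have "\<dots> = ((a mod P)*u1!i + (b*v1!i) mod P) mod P"
          by (metis mod_add_cong mod_mult_left_eq mod_mod_trivial)
        also have "\<dots> = u1!i" using am bv[OF that] R1(3) that by simp
        finally show ?thesis .
      qed
      show ?thesis using uu vv by simp
    qed
  qed
  then show ?thesis using R1 R2 by (simp add: list_eq_iff_nth_eq)
qed


lemma col_e1_aux:
  fixes x y :: int
  assumes pr: "prime p" and nx: "\<not> int p dvd x"
  shows "\<exists>a b c d. a*d-b*c = 1 \<and> (a*x+b*y) mod int p = 1 \<and> (c*x+d*y) mod int p = 0"
proof -
  define P where "P = int p"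
  have p1: "P > 1" using pr prime_gt_1_nat P_def by auto
  have prP: "prime P" using pr P_def by simp
  have "coprime P x" using prime_imp_coprime[OF prP] nx P_def by simp
  then have "coprime x P" by (simp add: coprime_commute)
  then obtain z where z: "[x*z = 1] (mod P)" using cong_solve_coprime_int by blast
  define c where "c = (1-y)*z"
  have cx: "[c*x + y = 1] (mod P)"
  proof -
    have "[(1-y)*(x*z) + y = (1-y)*1 + y] (mod P)"
      using z by (intro cong_add cong_mult) auto
    then show ?thesis by (simp add: c_def algebra_simps)
  qed
  define b where "b = 1 - x"
  have e1: "(1+b*c)*x + b*y = x + b*(c*x+y)" by (simp add: algebra_simps)
  have e2: "(c-1-b*c)*x + (1-b)*y = (c*x+y) - x - b*(c*x+y)" by (simp add: algebra_simps)
  have "[x + b*(c*x+y) = x + b*1] (mod P)" using cx by (intro cong_add cong_mult) auto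
  then have f1: "((1+b*c)*x + b*y) mod P = 1" using p1 unfolding e1 by (simp add: cong_def b_def)
  have "[(c*x+y) - x - b*(c*x+y) = 1 - x - b*1] (mod P)" using cx by (intro cong_diff cong_mult) auto
  then have f2: "((c-1-b*c)*x + (1-b)*y) mod P = 0" unfolding e2 by (simp add: cong_def b_def)
  have "(1+b*c)*(1-b) - b*(c-1-b*c) = 1" by (simp add: algebra_simps)
  then show ?thesis using f1 f2 P_def
    by (rule_tac exI[of _ "1+b*c"], rule_tac exI[of _ b], rule_tac exI[of _ "c-1-b*c"], rule_tac exI[of _ "1-b"]) simp
qed

lemma col_e1:
  fixes x y :: int
  assumes pr: "prime p" and nz: "\<not> (int p dvd x \<and> int p dvd y)"
  shows "\<exists>a b c d. a*d-b*c = 1 \<and> (a*x+b*y) mod int p = 1 \<and> (c*x+d*y) mod int p = 0"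
proof (cases "int p dvd x")
  case False then show ?thesis using col_e1_aux[OF pr] by blast
next
  case True
  then have "\<not> int p dvd (x+y)" using nz by (simp add: dvd_add_right_iff)
  then obtain a b c d where g: "a*d-b*c = 1" "(a*(x+y)+b*y) mod int p = 1" "(c*(x+y)+d*y) mod int p = 0"
    using col_e1_aux[OF pr, of "x+y" y] by auto
  have "a*(c+d) - (a+b)*c = 1" using g(1) by (simp add: algebra_simps)
  moreover have "(a*x+(a+b)*y) mod int p = 1" using g(2) by (simp add: algebra_simps)
  moreover have "(c*x+(c+d)*y) mod int p = 0" using g(3) by (simp add: algebra_simps)
  ultimately show ?thesis
    by (rule_tac exI[of _ a], rule_tac exI[of _ "a+b"], rule_tac exI[of _ c], rule_tac exI[of _ "c+d"]) simp
qed

lemma orb_I: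
  assumes "x \<in> pairs p n" "p > 0" "a*d-b*c = 1"
  shows "(x, act p (a,b,c,d) x) \<in> orbit_rel p n"
  unfolding orbit_rel_def SL2Z_def
  using assms act_pairs[OF assms(1,2)]
  by (intro CollectI case_prodI conjI bexI[of _ "(a,b,c,d)"]) auto


lemma canon_exists:
  assumes pr: "prime p" and X: "(u,v) \<in> pairs p n"
  shows "\<exists>y\<in>pairs p n. canon p n y \<and> ((u,v),y) \<in> orbit_rel p n"
proof -
  define P where "P = int p"
  have p1: "P > 1" using pr prime_gt_1_nat P_def by auto
  have p0: "p > 0" using pr prime_gt_0_nat by blast
  have prP: "prime P" using pr P_def by simp
  have E: "equiv (pairs p n) (orbit_rel p n)" using equiv_orb[OF p0] .
  have tr: "trans (orbit_rel p n)" using E by (simp add: equiv_def)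
  have R: "length u = n" "length v = n" "\<forall>i<n. 0 \<le> u!i \<and> u!i < P" "\<forall>i<n. 0 \<le> v!i \<and> v!i < P"
    using X unfolding pairs_def P_def by (auto simp: subset_iff)
  show ?thesis
  proof (cases "\<forall>i<n. u!i = 0 \<and> v!i = 0")
    case True
    have "((u,v),(u,v)) \<in> orbit_rel p n" using E X by (simp add: equiv_def refl_on_def)
    moreover have "canon p n (u,v)" using True by simp
    ultimately show ?thesis using X by blast
  next
    case False
    define J where "J = (LEAST i. i<n \<and> \<not>(u!i = 0 \<and> v!i = 0))"
    have J: "J<n \<and> \<not>(u!J = 0 \<and> v!J = 0)" using False unfolding J_def by (metis (mono_tags, lifting) LeastI)
    have Jb: "u!i = 0 \<and> v!i = 0" if "i<J" for i
      using not_less_Least[of i "\<lambda>i. i<n \<and> \<not>(u!i = 0 \<and> v!i = 0)"] that J J_def by auto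
    have "\<not> (P dvd u!J \<and> P dvd v!J)"
      using J R small_dvd by metis
    then obtain a b c d where g: "a*d-b*c = 1" "(a*u!J+b*v!J) mod P = 1" "(c*u!J+d*v!J) mod P = 0"
      using col_e1[OF pr, of "u!J" "v!J"] unfolding P_def by auto
    obtain u' v' where A: "act p (a,b,c,d) (u,v) = (u',v')" by fastforce
    have H: "length u' = n" "length v' = n" "\<forall>i<n. u'!i = (a*u!i + b*v!i) mod P \<and> v'!i = (c*u!i + d*v!i) mod P"
      using A R unfolding P_def by (subst (asm) act_eq_iff; simp)+
    have X': "(u',v') \<in> pairs p n" using act_pairs[OF X p0, of "(a,b,c,d)"] A by metis
    have O1: "((u,v),(u',v')) \<in> orbit_rel p n" using orb_I[OF X p0 g(1)] A by metis
    have R': "\<forall>i<n. 0 \<le> u'!i \<and> u'!i < P" "\<forall>i<n. 0 \<le> v'!i \<and> v'!i < P"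
      using X' unfolding pairs_def P_def by (auto simp: subset_iff)
    have Jb': "u'!i = 0 \<and> v'!i = 0" if "i<J" for i using Jb[OF that] H(3) that J by simp
    have J': "u'!J = 1" "v'!J = 0" using g H(3) J by simp_all
    show ?thesis
    proof (cases "\<forall>i. J<i \<and> i<n \<longrightarrow> v'!i = 0")
      case True
      have "canon p n (u',v')" unfolding canon.simps
        apply (rule disjI2, rule exI[of _ J], rule exI[of _ n])
        using J Jb' J' True by auto
      then show ?thesis using X' O1 by blast
    next
      case False
      define K where "K = (LEAST i. J<i \<and> i<n \<and> v'!i \<noteq> 0)"
      have K: "J<K \<and> K<n \<and> v'!K \<noteq> 0" using False unfolding K_def by (metis (mono_tags, lifting) LeastI)
      have Kb: "v'!i = 0" if "J<i" "i<K" for i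
        using not_less_Least[of i "\<lambda>i. J<i \<and> i<n \<and> v'!i \<noteq> 0"] that K K_def by auto
      have t: "0 < v'!K" "v'!K < P" using K R'(2) by (auto simp: order.strict_iff_order)
      have "\<not> P dvd v'!K"
      proof
        assume "P dvd v'!K"
        then have "v'!K = 0" using small_dvd[of "v'!K" P] t by simp
        then show False using t by simp
      qed
      then have "coprime P (v'!K)" using prime_imp_coprime[OF prP] by simp
      then have "coprime (v'!K) P" by (simp add: coprime_commute)
      then obtain z where z: "[v'!K*z = 1] (mod P)" using cong_solve_coprime_int by blast
      define \<beta> where "\<beta> = - (u'!K) * z"
      obtain u'' v'' where A2: "act p (1,\<beta>,0,1) (u',v') = (u'',v'')" by fastforce
      have H2: "length u'' = n" "length v'' = n" "\<forall>i<n. u''!i = (1*u'!i + \<beta>*v'!i) mod P \<and> v''!i = (0*u'!i + 1*v'!i) mod P"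
        using A2 H unfolding P_def by (subst (asm) act_eq_iff; simp)+
      have X'': "(u'',v'') \<in> pairs p n" using act_pairs[OF X' p0, of "(1,\<beta>,0,1)"] A2 by metis
      have O2: "((u',v'),(u'',v'')) \<in> orbit_rel p n" using orb_I[OF X' p0, of 1 1 \<beta> 0] A2 by (simp del: act.simps)
      have O: "((u,v),(u'',v'')) \<in> orbit_rel p n" using tr O1 O2 by (meson transD)
      have uK: "u''!K = 0"
      proof -
        have "[u'!K + \<beta>*v'!K = u'!K - u'!K * 1] (mod P)"
        proof -
          have "u'!K + \<beta>*v'!K = u'!K - u'!K * (v'!K*z)" by (simp add: \<beta>_def algebra_simps)
          moreover have "[u'!K - u'!K * (v'!K*z) = u'!K - u'!K * 1] (mod P)"
            using z by (intro cong_diff cong_mult) auto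
          ultimately show ?thesis by simp
        qed
        then show ?thesis using H2(3) K by (simp add: cong_def)
      qed
      have "canon p n (u'',v'')" unfolding canon.simps
      proof (rule disjI2, rule exI[of _ J], rule exI[of _ K], intro conjI)
        show "J<K" "K\<le>n" using K by auto
        show "\<forall>i<J. u''!i = 0 \<and> v''!i = 0" using Jb' H2(3) J by simp
        show "u''!J = 1" "v''!J = 0" using J' H2(3) J p1 by simp_all
        show "\<forall>i. J<i \<and> i<K \<longrightarrow> v''!i = 0" using Kb H2(3) K by auto
        show "K<n \<longrightarrow> u''!K = 0 \<and> v''!K \<noteq> 0" using uK H2(3) K R'(2) by auto
      qed
      then show ?thesis using X'' O by blast
    qed
  qed
qed


theorem theorem3p1:
  fixes p n :: nat
  assumes "prime p" and "n \<ge> 1"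
  shows "\<exists>f. bij_betw f (W p n) (orbits p n)"
proof -
  have pr: "prime p" by fact
  have p0: "p > 0" using pr prime_gt_0_nat by blast
  have E: "equiv (pairs p n) (orbit_rel p n)" using equiv_orb[OF p0] .
  define f where "f = (\<lambda>w. orbit_rel p n `` {dec p w})"
  have inj: "inj_on f (W p n)"
  proof (rule inj_onI)
    fix w1 w2 assume w: "w1 \<in> W p n" "w2 \<in> W p n" "f w1 = f w2"
    have "(dec p w1, dec p w2) \<in> orbit_rel p n"
      using eq_equiv_class[OF w(3)[unfolded f_def] E dec_W(1)[OF pr w(2)]] .
    then obtain a b c d where g: "a*d-b*c = 1" "act p (a,b,c,d) (dec p w1) = dec p w2"
      unfolding orbit_rel_def SL2Z_def by auto
    obtain u1 v1 where 1: "dec p w1 = (u1,v1)" by fastforce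
    obtain u2 v2 where 2: "dec p w2 = (u2,v2)" by fastforce
    have "(u1,v1) = (u2,v2)"
      using canon_unique[OF pr, of u1 v1 n u2 v2 a d b c] dec_W[OF pr w(1)] dec_W[OF pr w(2)] g 1 2
      by (simp del: act.simps canon.simps)
    then show "w1 = w2" using dec_inj 1 2 by metis
  qed
  have "f ` W p n = orbits p n"
  proof
    show "f ` W p n \<subseteq> orbits p n"
      unfolding orbits_def f_def using dec_W[OF pr] by (auto intro: quotientI)
    show "orbits p n \<subseteq> f ` W p n"
    proof
      fix X assume "X \<in> orbits p n"
      then obtain x where x: "x \<in> pairs p n" "X = orbit_rel p n `` {x}"
        unfolding orbits_def by (auto elim: quotientE)
      obtain u v where uv: "x = (u,v)" by fastforce
      obtain y where y: "y \<in> pairs p n" "canon p n y" "(x,y) \<in> orbit_rel p n"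
        using canon_exists[OF pr, of u v n] x uv by auto
      obtain u' v' where y': "y = (u',v')" by fastforce
      have w: "enc p y \<in> W p n" "dec p (enc p y) = y" using enc_W[OF pr, of u' v' n] y y' by auto
      have "f (enc p y) = orbit_rel p n `` {y}" using w f_def by simp
      also have "\<dots> = X" using equiv_class_eq[OF E y(3)] x by simp
      finally show "X \<in> f ` W p n" using w by (metis imageI)
    qed
  qed
  then show ?thesis using inj bij_betw_def by blast
qed

end
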